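(* Let $\operatorname{R}_4=\{a_0,a_1,a_2,a_3\}$ be the dihedral quandle of order $4$, with $a_ia_j=a_{2j-i \pmod 4}$. Then $\operatorname{Aut}(\mathbb{Z}[\operatorname{R}_4])\cong(\mathbb{Z}_2\times\mathbb{Z}_2)\rtimes\mathbb{Z}_2$.
   Context: For a quandle $Q$, the quandle ring $\mathbb{Z}[Q]$ is the free abelian group with basis $Q$, with multiplication $\big(\sum_i\alpha_i q_i\big)\big(\sum_j\beta_j q_j\big)=\sum_{i,j}\alpha_i\beta_j (q_iq_j)$. $\operatorname{Aut}(\mathbb{Z}[Q])$ denotes the group of ring automorphisms of $\mathbb{Z}[Q]$ (bijective additive maps preserving the multiplication). *)

theory Defs
  imports "HOL-Algebra.Algebra"
begin

text \<open>The quandle ring Z[Q] is the free abelian group with basis Q, modelled as the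
  integer-valued functions on the type of Q that vanish outside Q (Q finite, so
  these are exactly the finitely supported ones); the basis element q is the
  indicator of q.\<close>

definition qring_elems :: "'a set \<Rightarrow> ('a \<Rightarrow> int) set" where
  "qring_elems Q = {f. \<forall>x. x \<notin> Q \<longrightarrow> f x = 0}"

definition qring_add :: "('a \<Rightarrow> int) \<Rightarrow> ('a \<Rightarrow> int) \<Rightarrow> ('a \<Rightarrow> int)" where
  "qring_add f g = (\<lambda>z. f z + g z)"

definition qring_mult ::
  "'a set \<Rightarrow> ('a \<Rightarrow> 'a \<Rightarrow> 'a) \<Rightarrow> ('a \<Rightarrow> int) \<Rightarrow> ('a \<Rightarrow> int) \<Rightarrow> ('a \<Rightarrow> int)" where
  "qring_mult Q qop f g =
     (\<lambda>z. \<Sum>x\<in>Q. \<Sum>y\<in>Q. if qop x y = z then f x * g y else 0)"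

text \<open>Ring automorphisms of Z[Q]: bijective additive maps preserving the product
  (made extensional so that equal automorphisms are equal HOL functions).\<close>

definition qring_auts ::
  "'a set \<Rightarrow> ('a \<Rightarrow> 'a \<Rightarrow> 'a) \<Rightarrow> (('a \<Rightarrow> int) \<Rightarrow> ('a \<Rightarrow> int)) set" where
  "qring_auts Q qop =
     {\<phi>. \<phi> \<in> extensional (qring_elems Q)
        \<and> bij_betw \<phi> (qring_elems Q) (qring_elems Q)
        \<and> (\<forall>f\<in>qring_elems Q. \<forall>g\<in>qring_elems Q.
              \<phi> (qring_add f g) = qring_add (\<phi> f) (\<phi> g))
        \<and> (\<forall>f\<in>qring_elems Q. \<forall>g\<in>qring_elems Q.
              \<phi> (qring_mult Q qop f g) = qring_mult Q qop (\<phi> f) (\<phi> g))}"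

definition qring_Aut ::
  "'a set \<Rightarrow> ('a \<Rightarrow> 'a \<Rightarrow> 'a) \<Rightarrow> (('a \<Rightarrow> int) \<Rightarrow> ('a \<Rightarrow> int)) monoid" where
  "qring_Aut Q qop =
     \<lparr>carrier = qring_auts Q qop,
      monoid.mult = (\<lambda>\<phi> \<psi>. compose (qring_elems Q) \<phi> \<psi>),
      one = restrict id (qring_elems Q)\<rparr>"

definition R4 :: "int set" where
  "R4 = {0, 1, 2, 3}"

definition R4_op :: "int \<Rightarrow> int \<Rightarrow> int" where
  "R4_op i j = (2 * j - i) mod 4"

definition semidirect_prod ::
  "('n, 'c) monoid_scheme \<Rightarrow> ('h, 'd) monoid_scheme \<Rightarrow> ('h \<Rightarrow> 'n \<Rightarrow> 'n)
     \<Rightarrow> ('n \<times> 'h) monoid" where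
  "semidirect_prod N H act =
     \<lparr>carrier = carrier N \<times> carrier H,
      monoid.mult = (\<lambda>(n, h) (n', h'). (n \<otimes>\<^bsub>N\<^esub> act h n', h \<otimes>\<^bsub>H\<^esub> h')),
      one = (\<one>\<^bsub>N\<^esub>, \<one>\<^bsub>H\<^esub>)\<rparr>"

text \<open>Z_2 and the (unique up to isomorphism) nontrivial action of Z_2 on Z_2 \<times> Z_2,
  swapping the two factors.\<close>

abbreviation Z2 :: "int monoid" where
  "Z2 \<equiv> integer_mod_group 2"

definition swap_act :: "int \<Rightarrow> int \<times> int \<Rightarrow> int \<times> int" where
  "swap_act h p = (if h = 0 then p else (snd p, fst p))"

definition Z2xZ2_rtimes_Z2 :: "((int \<times> int) \<times> int) monoid" where
  "Z2xZ2_rtimes_Z2 = semidirect_prod (Z2 \<times>\<times> Z2) Z2 swap_act"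

end

theory Submission
  imports Defs
begin

abbreviation "E \<equiv> qring_elems R4"
definition ebas :: "int \<Rightarrow> int \<Rightarrow> int" where "ebas j = (\<lambda>z. if z = j then 1 else 0)"

lemma mult_expl:
  "qring_mult R4 R4_op f g z =
    (if z = 0 then f 0 * (g 0 + g 2) + f 2 * (g 1 + g 3)
     else if z = 1 then f 1 * (g 1 + g 3) + f 3 * (g 0 + g 2)
     else if z = 2 then f 2 * (g 0 + g 2) + f 0 * (g 1 + g 3)
     else if z = 3 then f 3 * (g 1 + g 3) + f 1 * (g 0 + g 2) else 0)"
  unfolding qring_mult_def R4_def R4_op_def
  by (simp add: algebra_simps)

lemma inE: "f \<in> E \<longleftrightarrow> (\<forall>z. z \<notin> R4 \<longrightarrow> f z = 0)"
  by (simp add: qring_elems_def)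

lemma R4_iff: "z \<in> R4 \<longleftrightarrow> z = 0 \<or> z = 1 \<or> z = 2 \<or> z = 3"
  by (auto simp: R4_def)

lemma ebas_E: "j \<in> R4 \<Longrightarrow> ebas j \<in> E"
  by (auto simp: inE ebas_def)

lemma ebas_idem: "i \<in> R4 \<Longrightarrow> qring_mult R4 R4_op (ebas i) (ebas i) = ebas i"
  unfolding R4_iff by (elim disjE; rule ext; simp add: mult_expl ebas_def)

lemma ebas_01: "qring_mult R4 R4_op (ebas 0) (ebas 1) = ebas 2"
  by (rule ext; simp add: mult_expl ebas_def)

lemma ebas_10: "qring_mult R4 R4_op (ebas 1) (ebas 0) = ebas 3"
  by (rule ext; simp add: mult_expl ebas_def)

definition smul :: "int \<Rightarrow> (int \<Rightarrow> int) \<Rightarrow> (int \<Rightarrow> int)" where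
  "smul n h = (\<lambda>z. n * h z)"

lemma smul_E: "h \<in> E \<Longrightarrow> smul n h \<in> E"
  by (auto simp: inE smul_def)

lemma add_E: "f \<in> E \<Longrightarrow> g \<in> E \<Longrightarrow> qring_add f g \<in> E"
  by (auto simp: inE qring_add_def)

lemma zero_E: "(\<lambda>z. 0) \<in> E"
  by (auto simp: inE)

locale autR4 =
  fixes \<phi>
  assumes aut: "\<phi> \<in> qring_auts R4 R4_op"
begin

lemma ext': "\<phi> \<in> extensional E" and bij: "bij_betw \<phi> E E"
  and addh: "\<And>f g. f \<in> E \<Longrightarrow> g \<in> E \<Longrightarrow> \<phi> (qring_add f g) = qring_add (\<phi> f) (\<phi> g)"
  and multh: "\<And>f g. f \<in> E \<Longrightarrow> g \<in> E \<Longrightarrow>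
      \<phi> (qring_mult R4 R4_op f g) = qring_mult R4 R4_op (\<phi> f) (\<phi> g)"
  using aut by (auto simp: qring_auts_def)

lemma mapE: "f \<in> E \<Longrightarrow> \<phi> f \<in> E"
  using bij bij_betwE by blast

lemma phi0: "\<phi> (\<lambda>z. 0) = (\<lambda>z. 0)"
proof -
  have "\<phi> (qring_add (\<lambda>z. 0) (\<lambda>z. 0)) = qring_add (\<phi> (\<lambda>z. 0)) (\<phi> (\<lambda>z. 0))"
    using addh zero_E by blast
  moreover have "qring_add (\<lambda>z. 0::int) (\<lambda>z. 0) = (\<lambda>z. 0)" by (simp add: qring_add_def)
  ultimately show ?thesis by (auto simp: qring_add_def fun_eq_iff)
qed

lemma phi_smul: assumes h: "h \<in> E" shows "\<phi> (smul n h) = smul n (\<phi> h)"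
proof (induction n rule: int_induct[where k = 0])
  case base
  then show ?case using phi0 by (simp add: smul_def)
next
  case (step1 i)
  have "smul (i+1) h = qring_add (smul i h) h" by (auto simp: smul_def qring_add_def algebra_simps)
  then have "\<phi> (smul (i+1) h) = qring_add (\<phi> (smul i h)) (\<phi> h)" using addh smul_E h by simp
  then show ?case using step1 by (auto simp: smul_def qring_add_def algebra_simps fun_eq_iff)
next
  case (step2 i)
  have "smul i h = qring_add (smul (i - 1) h) h" by (auto simp: smul_def qring_add_def algebra_simps)
  then have "\<phi> (smul i h) = qring_add (\<phi> (smul (i - 1) h)) (\<phi> h)" using addh smul_E h by simp
  then show ?case using step2 by (auto simp: smul_def qring_add_def algebra_simps fun_eq_iff)
qed

lemma decomp: assumes f: "f \<in> E"
  shows "f = qring_add (qring_add (qring_add (smul (f 0) (ebas 0)) (smul (f 1) (ebas 1)))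
     (smul (f 2) (ebas 2))) (smul (f 3) (ebas 3))"
  using f unfolding inE R4_iff by (auto simp: fun_eq_iff qring_add_def smul_def ebas_def)

lemma linear: assumes f: "f \<in> E"
  shows "\<phi> f = (\<lambda>z. f 0 * \<phi> (ebas 0) z + f 1 * \<phi> (ebas 1) z + f 2 * \<phi> (ebas 2) z + f 3 * \<phi> (ebas 3) z)"
proof -
  have R: "0 \<in> R4" "1 \<in> R4" "2 \<in> R4" "3 \<in> R4" by (auto simp: R4_def)
  note EE = ebas_E[OF R(1)] ebas_E[OF R(2)] ebas_E[OF R(3)] ebas_E[OF R(4)]
  have "\<phi> f = \<phi> (qring_add (qring_add (qring_add (smul (f 0) (ebas 0)) (smul (f 1) (ebas 1)))
     (smul (f 2) (ebas 2))) (smul (f 3) (ebas 3)))" using decomp[OF f] by simp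
  also have "\<dots> = qring_add (qring_add (qring_add (\<phi> (smul (f 0) (ebas 0))) (\<phi> (smul (f 1) (ebas 1))))
     (\<phi> (smul (f 2) (ebas 2)))) (\<phi> (smul (f 3) (ebas 3)))"
    using EE by (simp add: addh add_E smul_E)
  also have "\<dots> = (\<lambda>z. f 0 * \<phi> (ebas 0) z + f 1 * \<phi> (ebas 1) z + f 2 * \<phi> (ebas 2) z + f 3 * \<phi> (ebas 3) z)"
    using EE by (simp only: phi_smul) (simp add: qring_add_def smul_def)
  finally show ?thesis .
qed

end


lemma idem_scalar:
  fixes a b c d :: int
  assumes e1: "a = a * (a + c) + c * (b + d)" and e2: "c = c * (a + c) + a * (b + d)"
    and e3: "b = b * (b + d) + d * (a + c)" and e4: "d = d * (b + d) + b * (a + c)"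
  shows "(a=0 \<and> b=0 \<and> c=0 \<and> d=0) \<or> (b=0 \<and> d=0 \<and> a + c=1) \<or> (a=0 \<and> c=0 \<and> b + d=1)"
proof -
  have h1: "(a + c) * ((a + c) + (b + d) - 1) = (a * (a + c) + c * (b + d) - a) + (c * (a + c) + a * (b + d) - c)"
    by (simp add: algebra_simps)
  then have h1: "(a + c) * ((a + c) + (b + d) - 1) = 0" using e1 e2 by simp
  have h2: "(b + d) * ((a + c) + (b + d) - 1) = (b * (b + d) + d * (a + c) - b) + (d * (b + d) + b * (a + c) - d)"
    by (simp add: algebra_simps)
  then have h2: "(b + d) * ((a + c) + (b + d) - 1) = 0" using e3 e4 by simp
  show ?thesis
  proof (cases "(a + c) + (b + d) = 1")
    case False
    then have "a + c = 0" "b + d = 0" using h1 h2 by auto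
    then have "a = 0" "c = 0" "b = 0" "d = 0" using e1 e2 e3 e4 by auto
    then show ?thesis by simp
  next
    case True
    have pc: "a + c = 1 - (b + d)" and qc: "b + d = 1 - (a + c)" using True by simp_all
    have k1: "(b + d) * (c - a) = a * (a + c) + c * (b + d) - a"
      unfolding pc by (simp add: algebra_simps)
    then have k1: "(b + d) * (c - a) = 0" using e1 by simp
    have k2: "(a + c) * (d - b) = b * (b + d) + d * (a + c) - b"
      unfolding qc by (simp add: algebra_simps)
    then have k2: "(a + c) * (d - b) = 0" using e3 by simp
    show ?thesis
    proof (cases "b + d = 0")
      case True
      then show ?thesis using k2 \<open>(a + c) + (b + d) = 1\<close> by auto
    next
      case False
      then have "c = a" using k1 by auto
      show ?thesis
      proof (cases "a + c = 0")
        case True then show ?thesis using \<open>c = a\<close> \<open>(a + c) + (b + d) = 1\<close> by auto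
      next
        case False
        then have "d = b" using k2 by auto
        then show ?thesis using \<open>c = a\<close> \<open>(a + c) + (b + d) = 1\<close> by presburger
      qed
    qed
  qed
qed

abbreviation "CT \<equiv> carrier Z2xZ2_rtimes_Z2"

lemma Z2c: "carrier Z2 = {0,1::int}"
proof -
  have "{0..<int 2} = {0,1::int}" by auto
  then show ?thesis by (simp add: carrier_integer_mod_group)
qed

lemma CT_eq: "CT = ({0,1} \<times> {0,1}) \<times> {0,1}"
  unfolding Z2xZ2_rtimes_Z2_def semidirect_prod_def by (simp add: Z2c)

lemma CT_cases: "g \<in> CT \<Longrightarrow> g = ((0,0),0) \<or> g = ((0,0),1) \<or> g = ((0,1),0) \<or> g = ((0,1),1)
   \<or> g = ((1,0),0) \<or> g = ((1,0),1) \<or> g = ((1,1),0) \<or> g = ((1,1),1)"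
  unfolding CT_eq by auto

lemma multT: "x \<otimes>\<^bsub>Z2xZ2_rtimes_Z2\<^esub> y =
  (let ((a,b),c) = x; ((a',b'),c') = y; (a'',b'') = swap_act c (a',b')
   in (((a + a'') mod 2, (b + b'') mod 2), (c + c') mod 2))"
  by (simp add: Z2xZ2_rtimes_Z2_def semidirect_prod_def split: prod.splits)

lemma multT_closed: "x \<in> CT \<Longrightarrow> y \<in> CT \<Longrightarrow> x \<otimes>\<^bsub>Z2xZ2_rtimes_Z2\<^esub> y \<in> CT"
  apply (drule CT_cases)+ apply (elim disjE) by (simp_all add: multT swap_act_def CT_eq)

definition sg :: "(int \<times> int) \<times> int \<Rightarrow> int" where
  "sg g = (if fst (fst g) = snd (fst g) then 1 else -1) * (if snd g = 0 then 1 else -1)"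
definition tg :: "(int \<times> int) \<times> int \<Rightarrow> int" where
  "tg g = (if snd g = 0 then 2 * snd (fst g) else 1 - 2 * snd (fst g))"
definition permg :: "(int \<times> int) \<times> int \<Rightarrow> int \<Rightarrow> int" where
  "permg g z = (sg g * z + tg g) mod 4"

lemma multT_expl: "((a, b), c) \<otimes>\<^bsub>Z2xZ2_rtimes_Z2\<^esub> ((a2, b2), c2) =
  ((if c = 0 then ((a + a2) mod 2, (b + b2) mod 2) else ((a + b2) mod 2, (b + a2) mod 2)), (c + c2) mod 2)"
  by (simp add: multT swap_act_def)

lemma sg_cases: "sg g = 1 \<or> sg g = -1" by (simp add: sg_def)

lemma sg_mult: "g \<in> CT \<Longrightarrow> h \<in> CT \<Longrightarrow> sg (g \<otimes>\<^bsub>Z2xZ2_rtimes_Z2\<^esub> h) = sg h * sg g \<and>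
   tg (g \<otimes>\<^bsub>Z2xZ2_rtimes_Z2\<^esub> h) mod 4 = (sg h * tg g + tg h) mod 4"
  apply (drule CT_cases)+ apply (elim disjE) 
  by (simp_all only: multT_expl) (simp_all add: sg_def tg_def)

lemma mod4_lin: "(s * (m mod 4) + t) mod 4 = (s * m + t) mod (4::int)"
proof -
  have "(s * (m mod 4) + t) mod 4 = ((s * (m mod 4)) mod 4 + t) mod 4" by (rule mod_add_left_eq[symmetric])
  also have "\<dots> = ((s * m) mod 4 + t) mod 4" by (simp only: mod_mult_right_eq)
  also have "\<dots> = (s * m + t) mod 4" by (rule mod_add_left_eq)
  finally show ?thesis .
qed

lemma mod4_op: "(2 * (A mod 4) - B mod 4) mod 4 = (2 * A - B) mod (4::int)"
proof -
  have "(2 * (A mod 4) - B mod 4) mod 4 = (2 * (A mod 4) - B) mod 4" by (rule mod_diff_right_eq)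
  also have "\<dots> = ((2 * (A mod 4)) mod 4 - B) mod 4" by (rule mod_diff_left_eq[symmetric])
  also have "\<dots> = ((2 * A) mod 4 - B) mod 4" by (simp only: mod_mult_right_eq)
  also have "\<dots> = (2 * A - B) mod 4" by (rule mod_diff_left_eq)
  finally show ?thesis .
qed

lemma mod4_inv: "(s * (m mod 4 - t)) mod 4 = (s * (m - t)) mod (4::int)"
proof -
  have "(s * (m mod 4 - t)) mod 4 = (s * ((m mod 4 - t) mod 4)) mod 4" by (rule mod_mult_right_eq[symmetric])
  also have "\<dots> = (s * ((m - t) mod 4)) mod 4" by (simp only: mod_diff_left_eq)
  also have "\<dots> = (s * (m - t)) mod 4" by (rule mod_mult_right_eq)
  finally show ?thesis .
qed

lemma permg_R4: "permg g z \<in> R4"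
proof -
  have "permg g z \<in> {0..<4}" unfolding permg_def by auto
  then show ?thesis unfolding R4_def by auto
qed

lemma op_R4: "R4_op x y \<in> R4"
proof -
  have "R4_op x y \<in> {0..<4}" unfolding R4_op_def by auto
  then show ?thesis unfolding R4_def by auto
qed

lemma permg_mult: "g \<in> CT \<Longrightarrow> h \<in> CT \<Longrightarrow>
   permg (g \<otimes>\<^bsub>Z2xZ2_rtimes_Z2\<^esub> h) z = permg h (permg g z)"
proof -
  assume g: "g \<in> CT" and h: "h \<in> CT"
  note sm = sg_mult[OF g h]
  have "permg h (permg g z) = (sg h * (sg g * z + tg g) + tg h) mod 4"
    unfolding permg_def by (rule mod4_lin)
  also have "\<dots> = (sg h * sg g * z + (sg h * tg g + tg h)) mod 4" by (simp add: algebra_simps)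
  also have "\<dots> = (sg h * sg g * z + (sg h * tg g + tg h) mod 4) mod 4" by (simp add: mod_add_right_eq)
  also have "\<dots> = (sg (g \<otimes>\<^bsub>Z2xZ2_rtimes_Z2\<^esub> h) * z + tg (g \<otimes>\<^bsub>Z2xZ2_rtimes_Z2\<^esub> h) mod 4) mod 4"
    using sm by simp
  also have "\<dots> = permg (g \<otimes>\<^bsub>Z2xZ2_rtimes_Z2\<^esub> h) z" unfolding permg_def by (simp add: mod_add_right_eq)
  finally show ?thesis by simp
qed

lemma permg_op: "permg g (R4_op x y) = R4_op (permg g x) (permg g y)"
proof -
  let ?s = "sg g" and ?t = "tg g"
  have "permg g (R4_op x y) = (?s * (2 * y - x) + ?t) mod 4"
    unfolding permg_def R4_op_def by (rule mod4_lin)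
  moreover have "R4_op (permg g x) (permg g y) = (2 * (?s * y + ?t) - (?s * x + ?t)) mod 4"
    unfolding permg_def R4_op_def by (rule mod4_op)
  ultimately show ?thesis by (simp add: algebra_simps)
qed

lemma permg_inj: "g \<in> CT \<Longrightarrow> h \<in> CT \<Longrightarrow> \<forall>z\<in>R4. permg g z = permg h z \<Longrightarrow> g = h"
proof -
  assume g: "g \<in> CT" and h: "h \<in> CT" and eq: "\<forall>z\<in>R4. permg g z = permg h z"
  then have "permg g 0 = permg h 0" "permg g 1 = permg h 1" by (auto simp: R4_def)
  then show "g = h" using CT_cases[OF g] CT_cases[OF h]
    by (elim disjE) (simp_all add: permg_def sg_def tg_def)
qed

lemma permg_inv: assumes x: "x \<in> R4" shows "(sg g * (permg g x - tg g)) mod 4 = x"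
proof -
  have "(sg g * (permg g x - tg g)) mod 4 = (sg g * (sg g * x + tg g - tg g)) mod 4"
    unfolding permg_def by (rule mod4_inv)
  also have "\<dots> = x mod 4" using sg_cases[of g] by auto
  also have "\<dots> = x" using x by (auto simp: R4_def)
  finally show ?thesis .
qed

lemma permg_inj_on: "inj_on (permg g) R4"
  by (rule inj_onI) (metis permg_inv)

lemma permg_bij: "g \<in> CT \<Longrightarrow> bij_betw (permg g) R4 R4"
  unfolding bij_betw_def using permg_inj_on[of g] permg_R4
  by (metis endo_inj_surj finite.emptyI finite_insert image_subsetI R4_def)


definition Phi :: "(int \<times> int) \<times> int \<Rightarrow> (int \<Rightarrow> int) \<Rightarrow> (int \<Rightarrow> int)" where
  "Phi g = restrict (\<lambda>f z. if z \<in> R4 then f (permg g z) else 0) E"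

lemma Phi_app: "f \<in> E \<Longrightarrow> Phi g f = (\<lambda>z. if z \<in> R4 then f (permg g z) else 0)"
  by (simp add: Phi_def)

lemma Phi_E: "f \<in> E \<Longrightarrow> Phi g f \<in> E"
  by (simp add: Phi_app inE)

lemma Phi_mult: assumes g: "g \<in> CT" and f: "f \<in> E" and h: "h \<in> E"
  shows "Phi g (qring_mult R4 R4_op f h) = qring_mult R4 R4_op (Phi g f) (Phi g h)"
proof
  fix z
  have m: "qring_mult R4 R4_op f h \<in> E" by (simp add: inE mult_expl R4_iff)
  let ?P = "permg g"
  have bij: "bij_betw ?P R4 R4" by (rule permg_bij[OF g])
  have inj: "inj_on ?P R4" using bij by (simp add: bij_betw_def)
  show "Phi g (qring_mult R4 R4_op f h) z = qring_mult R4 R4_op (Phi g f) (Phi g h) z"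
  proof (cases "z \<in> R4")
    case False
    then show ?thesis by (simp add: Phi_app[OF m] mult_expl R4_iff)
  next
    case True
    define G where "G = (\<lambda>u w. if R4_op u w = ?P z then f u * h w else 0)"
    have "qring_mult R4 R4_op (Phi g f) (Phi g h) z =
        (\<Sum>x\<in>R4. \<Sum>y\<in>R4. if R4_op x y = z then Phi g f x * Phi g h y else 0)"
      by (simp add: qring_mult_def)
    also have "\<dots> = (\<Sum>x\<in>R4. \<Sum>y\<in>R4. G (?P x) (?P y))"
    proof (rule sum.cong[OF refl], rule sum.cong[OF refl])
      fix x y assume x: "x \<in> R4" and y: "y \<in> R4"
      have "R4_op x y = z \<longleftrightarrow> ?P (R4_op x y) = ?P z"
        using inj op_R4 True by (meson inj_on_eq_iff)
      then have "R4_op x y = z \<longleftrightarrow> R4_op (?P x) (?P y) = ?P z" by (simp add: permg_op)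
      then show "(if R4_op x y = z then Phi g f x * Phi g h y else 0) = G (?P x) (?P y)"
        using x y by (simp add: G_def Phi_app[OF f] Phi_app[OF h])
    qed
    also have "\<dots> = (\<Sum>x\<in>R4. \<Sum>y\<in>R4. G (?P x) y)"
      by (rule sum.cong[OF refl]) (rule sum.reindex_bij_betw[OF bij])
    also have "\<dots> = (\<Sum>x\<in>R4. \<Sum>y\<in>R4. G x y)"
      by (rule sum.reindex_bij_betw[OF bij, where g = "\<lambda>x. \<Sum>y\<in>R4. G x y"])
    also have "\<dots> = qring_mult R4 R4_op f h (?P z)"
      by (simp add: qring_mult_def G_def)
    also have "\<dots> = Phi g (qring_mult R4 R4_op f h) z"
      using True by (simp add: Phi_app[OF m])
    finally show ?thesis by simp
  qed
qed

lemma Phi_aut: assumes g: "g \<in> CT" shows "Phi g \<in> qring_auts R4 R4_op"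
proof -
  have bij: "bij_betw (permg g) R4 R4" using permg_bij[OF g] .
  have inj: "inj_on (Phi g) E"
  proof (rule inj_onI)
    fix f1 f2 assume f1: "f1 \<in> E" and f2: "f2 \<in> E" and eq: "Phi g f1 = Phi g f2"
    show "f1 = f2"
    proof
      fix w show "f1 w = f2 w"
      proof (cases "w \<in> R4")
        case True
        then obtain z where z: "z \<in> R4" "w = permg g z" using bij by (metis bij_betw_imp_surj_on imageE)
        have "Phi g f1 z = Phi g f2 z" using eq by simp
        then show ?thesis using z f1 f2 by (simp add: Phi_app)
      next
        case False then show ?thesis using f1 f2 by (simp add: inE)
      qed
    qed
  qed
  have surj: "Phi g ` E = E"
  proof
    show "Phi g ` E \<subseteq> E" using Phi_E by blast
    show "E \<subseteq> Phi g ` E"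
    proof
      fix h assume h: "h \<in> E"
      define f where "f = (\<lambda>w. if w \<in> R4 then h (inv_into R4 (permg g) w) else 0)"
      have fE: "f \<in> E" by (simp add: f_def inE)
      have "Phi g f = h"
      proof
        fix z show "Phi g f z = h z"
        proof (cases "z \<in> R4")
          case True
          have "inv_into R4 (permg g) (permg g z) = z"
            using bij True by (simp add: bij_betw_def)
          have "Phi g f z = f (permg g z)" using True by (simp add: Phi_app[OF fE])
          then show ?thesis using True \<open>inv_into R4 (permg g) (permg g z) = z\<close> by (simp add: f_def permg_R4)
        next
          case False then show ?thesis using h by (simp add: Phi_app[OF fE] inE)
        qed
      qed
      then show "h \<in> Phi g ` E" using fE by blast
    qed
  qed
  have add: "Phi g (qring_add f1 f2) = qring_add (Phi g f1) (Phi g f2)" if "f1 \<in> E" "f2 \<in> E" for f1 f2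
    using that add_E[OF that] by (auto simp: Phi_app qring_add_def fun_eq_iff)
  show ?thesis unfolding qring_auts_def
    using inj surj add Phi_mult[OF g] by (auto simp: bij_betw_def Phi_def)
qed

lemma Phi_hom: assumes g: "g \<in> CT" and h: "h \<in> CT"
  shows "Phi (g \<otimes>\<^bsub>Z2xZ2_rtimes_Z2\<^esub> h) = compose E (Phi g) (Phi h)"
proof
  fix f show "Phi (g \<otimes>\<^bsub>Z2xZ2_rtimes_Z2\<^esub> h) f = compose E (Phi g) (Phi h) f"
  proof (cases "f \<in> E")
    case True
    have "compose E (Phi g) (Phi h) f = Phi g (Phi h f)" using True by (simp add: compose_def)
    also have "\<dots> = (\<lambda>z. if z \<in> R4 then Phi h f (permg g z) else 0)"
      using Phi_app[OF Phi_E[OF True]] by blast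
    also have "\<dots> = (\<lambda>z. if z \<in> R4 then f (permg h (permg g z)) else 0)"
    proof
      fix z
      have "Phi h f (permg g z) = f (permg h (permg g z))"
        unfolding Phi_app[OF True] using permg_R4[of g z] by simp
      then show "(if z \<in> R4 then Phi h f (permg g z) else 0) = (if z \<in> R4 then f (permg h (permg g z)) else 0)"
        by simp
    qed
    also have "\<dots> = Phi (g \<otimes>\<^bsub>Z2xZ2_rtimes_Z2\<^esub> h) f"
      using Phi_app[OF True] permg_mult[OF g h] by (auto simp: fun_eq_iff)
    finally show ?thesis by simp
  next
    case False then show ?thesis by (simp add: compose_def Phi_def)
  qed
qed

lemma Phi_inj: "inj_on Phi CT"
proof (rule inj_onI)
  fix g h assume g: "g \<in> CT" and h: "h \<in> CT" and eq: "Phi g = Phi h"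
  have "permg g z = permg h z" if z: "z \<in> R4" for z
  proof -
    have "Phi g (ebas (permg g z)) z = Phi h (ebas (permg g z)) z" using eq by simp
    then show ?thesis using z ebas_E[OF permg_R4] by (simp add: Phi_app ebas_def split: if_splits)
  qed
  then show "g = h" using permg_inj g h by blast
qed


definition vec :: "int \<Rightarrow> int \<Rightarrow> int \<Rightarrow> int \<Rightarrow> int \<Rightarrow> int" where
  "vec a b c d = (\<lambda>z. if z = 0 then a else if z = 1 then b else if z = 2 then c else if z = 3 then d else 0)"

lemma vec_rep: assumes u: "u \<in> E" and "u 0 = a" "u 1 = b" "u 2 = c" "u 3 = d"
  shows "u = vec a b c d"
proof
  fix z show "u z = vec a b c d z"
  proof (cases "z \<in> R4")
    case True then show ?thesis using assms unfolding R4_iff vec_def by auto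
  next
    case False then have "z \<noteq> 0" "z \<noteq> 1" "z \<noteq> 2" "z \<noteq> 3" unfolding R4_iff by auto
    then show ?thesis using False u unfolding vec_def inE by simp
  qed
qed

lemma vec_eq: "u \<in> E \<Longrightarrow> w \<in> E \<Longrightarrow> u 0 = w 0 \<Longrightarrow> u 1 = w 1 \<Longrightarrow> u 2 = w 2 \<Longrightarrow> u 3 = w 3 \<Longrightarrow> u = w"
  using vec_rep[of u] vec_rep[of w] by metis

lemma Phi_ebas: assumes i: "i \<in> R4"
  shows "Phi g (ebas i) = vec (ebas i (permg g 0)) (ebas i (permg g 1)) (ebas i (permg g 2)) (ebas i (permg g 3))"
proof
  fix z show "Phi g (ebas i) z = vec (ebas i (permg g 0)) (ebas i (permg g 1)) (ebas i (permg g 2)) (ebas i (permg g 3)) z"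
    unfolding Phi_app[OF ebas_E[OF i]] vec_def R4_iff by auto
qed

lemma R4m: "0 \<in> R4" "1 \<in> R4" "2 \<in> R4" "3 \<in> R4" by (auto simp: R4_def)

lemma caseA_fin:
  assumes "v0 = vec t 0 (1 - t) 0" "v1 = vec 0 s 0 (1 - s)" "v2 = vec (1 - t) 0 t 0" "v3 = vec 0 (1 - s) 0 s"
    and tt: "t = 0 \<or> t = 1" and ss: "s = 0 \<or> s = 1"
  shows "\<exists>g\<in>CT. v0 = Phi g (ebas 0) \<and> v1 = Phi g (ebas 1) \<and> v2 = Phi g (ebas 2) \<and> v3 = Phi g (ebas 3)"
  using tt ss
proof (elim disjE)
  assume "t = 0" "s = 0" then show ?thesis using assms
    by (intro bexI[of _ "((1,1),0)"]) (simp_all only: Phi_ebas[OF R4m(1)] Phi_ebas[OF R4m(2)] Phi_ebas[OF R4m(3)] Phi_ebas[OF R4m(4)], simp_all add: CT_eq permg_def sg_def tg_def ebas_def)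
next
  assume "t = 0" "s = 1" then show ?thesis using assms
    by (intro bexI[of _ "((0,1),0)"]) (simp_all only: Phi_ebas[OF R4m(1)] Phi_ebas[OF R4m(2)] Phi_ebas[OF R4m(3)] Phi_ebas[OF R4m(4)], simp_all add: CT_eq permg_def sg_def tg_def ebas_def)
next
  assume "t = 1" "s = 0" then show ?thesis using assms
    by (intro bexI[of _ "((1,0),0)"]) (simp_all only: Phi_ebas[OF R4m(1)] Phi_ebas[OF R4m(2)] Phi_ebas[OF R4m(3)] Phi_ebas[OF R4m(4)], simp_all add: CT_eq permg_def sg_def tg_def ebas_def)
next
  assume "t = 1" "s = 1" then show ?thesis using assms
    by (intro bexI[of _ "((0,0),0)"]) (simp_all only: Phi_ebas[OF R4m(1)] Phi_ebas[OF R4m(2)] Phi_ebas[OF R4m(3)] Phi_ebas[OF R4m(4)], simp_all add: CT_eq permg_def sg_def tg_def ebas_def)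
qed

lemma caseB_fin:
  assumes "v0 = vec 0 t 0 (1 - t)" "v1 = vec s 0 (1 - s) 0" "v2 = vec 0 (1 - t) 0 t" "v3 = vec (1 - s) 0 s 0"
    and tt: "t = 0 \<or> t = 1" and ss: "s = 0 \<or> s = 1"
  shows "\<exists>g\<in>CT. v0 = Phi g (ebas 0) \<and> v1 = Phi g (ebas 1) \<and> v2 = Phi g (ebas 2) \<and> v3 = Phi g (ebas 3)"
  using tt ss
proof (elim disjE)
  assume "t = 0" "s = 0" then show ?thesis using assms
    by (intro bexI[of _ "((1,1),1)"]) (simp_all only: Phi_ebas[OF R4m(1)] Phi_ebas[OF R4m(2)] Phi_ebas[OF R4m(3)] Phi_ebas[OF R4m(4)], simp_all add: CT_eq permg_def sg_def tg_def ebas_def)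
next
  assume "t = 0" "s = 1" then show ?thesis using assms
    by (intro bexI[of _ "((1,0),1)"]) (simp_all only: Phi_ebas[OF R4m(1)] Phi_ebas[OF R4m(2)] Phi_ebas[OF R4m(3)] Phi_ebas[OF R4m(4)], simp_all add: CT_eq permg_def sg_def tg_def ebas_def)
next
  assume "t = 1" "s = 0" then show ?thesis using assms
    by (intro bexI[of _ "((0,1),1)"]) (simp_all only: Phi_ebas[OF R4m(1)] Phi_ebas[OF R4m(2)] Phi_ebas[OF R4m(3)] Phi_ebas[OF R4m(4)], simp_all add: CT_eq permg_def sg_def tg_def ebas_def)
next
  assume "t = 1" "s = 1" then show ?thesis using assms
    by (intro bexI[of _ "((0,0),1)"]) (simp_all only: Phi_ebas[OF R4m(1)] Phi_ebas[OF R4m(2)] Phi_ebas[OF R4m(3)] Phi_ebas[OF R4m(4)], simp_all add: CT_eq permg_def sg_def tg_def ebas_def)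
qed

lemma idem_vec:
  assumes u: "u \<in> E" and idem: "qring_mult R4 R4_op u u = u" and nz: "u \<noteq> (\<lambda>z. 0)"
  shows "(u 1 = 0 \<and> u 3 = 0 \<and> u 0 + u 2 = 1) \<or> (u 0 = 0 \<and> u 2 = 0 \<and> u 1 + u 3 = 1)"
proof -
  have c: "u z = qring_mult R4 R4_op u u z" for z using idem by simp
  have e1: "u 0 = u 0 * (u 0 + u 2) + u 2 * (u 1 + u 3)" using c[of 0] by (simp add: mult_expl)
  have e2: "u 2 = u 2 * (u 0 + u 2) + u 0 * (u 1 + u 3)" using c[of 2] by (simp add: mult_expl)
  have e3: "u 1 = u 1 * (u 1 + u 3) + u 3 * (u 0 + u 2)" using c[of 1] by (simp add: mult_expl)
  have e4: "u 3 = u 3 * (u 1 + u 3) + u 1 * (u 0 + u 2)" using c[of 3] by (simp add: mult_expl)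
  have "\<not> (u 0 = 0 \<and> u 1 = 0 \<and> u 2 = 0 \<and> u 3 = 0)"
    using vec_eq[OF u zero_E] nz by auto
  then show ?thesis using idem_scalar[OF e1 e2 e3 e4] by auto
qed

lemma par01:
  fixes f0 f2 t :: int
  assumes h1: "f0 * t + f2 * (1 - t) = 1" and h2: "f0 * (1 - t) + f2 * t = 0"
  shows "t = 0 \<or> t = 1"
proof -
  have "(f0 - f2) * (2 * t - 1) = (f0 * t + f2 * (1 - t)) - (f0 * (1 - t) + f2 * t)"
    by (simp add: algebra_simps)
  then have "(f0 - f2) * (2 * t - 1) = 1" using h1 h2 by simp
  then have "2 * t - 1 = 1 \<or> 2 * t - 1 = -1" using zmult_eq_1_iff by blast
  then show ?thesis by auto
qed

lemma aut_eq:
  assumes a1: "\<phi>1 \<in> qring_auts R4 R4_op" and a2: "\<phi>2 \<in> qring_auts R4 R4_op"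
    and eq: "\<And>i. i \<in> R4 \<Longrightarrow> \<phi>1 (ebas i) = \<phi>2 (ebas i)"
  shows "\<phi>1 = \<phi>2"
proof
  fix f
  interpret A1: autR4 \<phi>1 by (rule autR4.intro[OF a1])
  interpret A2: autR4 \<phi>2 by (rule autR4.intro[OF a2])
  show "\<phi>1 f = \<phi>2 f"
  proof (cases "f \<in> E")
    case True
    have R: "0 \<in> R4" "1 \<in> R4" "2 \<in> R4" "3 \<in> R4" by (auto simp: R4_def)
    show ?thesis using A1.linear[OF True] A2.linear[OF True] eq[OF R(1)] eq[OF R(2)] eq[OF R(3)] eq[OF R(4)]
      by simp
  next
    case False
    then show ?thesis using A1.ext' A2.ext' by (simp add: extensional_def)
  qed
qed

context autR4
begin

lemma inj: "inj_on \<phi> E" using bij by (simp add: bij_betw_def)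

lemma surjE: assumes h: "h \<in> E" shows "\<exists>f\<in>E. \<phi> f = h"
proof -
  have "h \<in> \<phi> ` E" using bij h by (simp add: bij_betw_def)
  then show ?thesis by blast
qed

lemma R4_mem: "0 \<in> R4" "1 \<in> R4" "2 \<in> R4" "3 \<in> R4" by (auto simp: R4_def)

lemma vE: "i \<in> R4 \<Longrightarrow> \<phi> (ebas i) \<in> E" using mapE ebas_E by blast

lemma v_nz: assumes i: "i \<in> R4" shows "\<phi> (ebas i) \<noteq> (\<lambda>z. 0)"
proof
  assume "\<phi> (ebas i) = (\<lambda>z. 0)"
  then have "\<phi> (ebas i) = \<phi> (\<lambda>z. 0)" using phi0 by simp
  then have "ebas i = (\<lambda>z. 0)" by (rule inj_onD[OF inj _ ebas_E[OF i] zero_E])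
  then have "ebas i i = (0::int)" by simp
  then show False by (simp add: ebas_def)
qed

lemma v02: "\<phi> (ebas 0) \<noteq> \<phi> (ebas 2)"
proof
  assume "\<phi> (ebas 0) = \<phi> (ebas 2)"
  then have "ebas 0 = ebas 2" by (rule inj_onD[OF inj _ ebas_E[OF R4_mem(1)] ebas_E[OF R4_mem(3)]])
  then have "ebas 0 0 = (ebas 2 0 :: int)" by simp
  then show False by (simp add: ebas_def)
qed

lemma v_idem: assumes i: "i \<in> R4" shows "qring_mult R4 R4_op (\<phi> (ebas i)) (\<phi> (ebas i)) = \<phi> (ebas i)"
proof -
  have "\<phi> (qring_mult R4 R4_op (ebas i) (ebas i)) = qring_mult R4 R4_op (\<phi> (ebas i)) (\<phi> (ebas i))"
    by (rule multh[OF ebas_E[OF i] ebas_E[OF i]])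
  then show ?thesis using ebas_idem[OF i] by simp
qed

lemma v2eq: "\<phi> (ebas 2) = qring_mult R4 R4_op (\<phi> (ebas 0)) (\<phi> (ebas 1))"
  using multh[OF ebas_E[OF R4_mem(1)] ebas_E[OF R4_mem(2)]] ebas_01 by simp

lemma v3eq: "\<phi> (ebas 3) = qring_mult R4 R4_op (\<phi> (ebas 1)) (\<phi> (ebas 0))"
  using multh[OF ebas_E[OF R4_mem(2)] ebas_E[OF R4_mem(1)]] ebas_10 by simp

lemma classify: "\<exists>g\<in>CT. \<phi> = Phi g"
proof -
  define v0 where "v0 = \<phi> (ebas 0)"
  define v1 where "v1 = \<phi> (ebas 1)"
  define v2 where "v2 = \<phi> (ebas 2)"
  define v3 where "v3 = \<phi> (ebas 3)"
  have E0: "v0 \<in> E" and E1: "v1 \<in> E" and E2: "v2 \<in> E" and E3: "v3 \<in> E"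
    unfolding v0_def v1_def v2_def v3_def using vE R4_mem by auto
  have t0: "(v0 1 = 0 \<and> v0 3 = 0 \<and> v0 0 + v0 2 = 1) \<or> (v0 0 = 0 \<and> v0 2 = 0 \<and> v0 1 + v0 3 = 1)"
    unfolding v0_def using idem_vec[OF vE[OF R4_mem(1)] v_idem[OF R4_mem(1)] v_nz[OF R4_mem(1)]] .
  have t1: "(v1 1 = 0 \<and> v1 3 = 0 \<and> v1 0 + v1 2 = 1) \<or> (v1 0 = 0 \<and> v1 2 = 0 \<and> v1 1 + v1 3 = 1)"
    unfolding v1_def using idem_vec[OF vE[OF R4_mem(2)] v_idem[OF R4_mem(2)] v_nz[OF R4_mem(2)]] .
  have m2: "v2 z = qring_mult R4 R4_op v0 v1 z" for z unfolding v0_def v1_def v2_def using v2eq by simp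
  have m3: "v3 z = qring_mult R4 R4_op v1 v0 z" for z unfolding v0_def v1_def v3_def using v3eq by simp
  have ne: "v0 \<noteq> v2" unfolding v0_def v2_def using v02 .
  have lin: "\<phi> f z = f 0 * v0 z + f 1 * v1 z + f 2 * v2 z + f 3 * v3 z" if "f \<in> E" for f z
    using linear[OF that] unfolding v0_def v1_def v2_def v3_def by simp
  obtain f where fE: "f \<in> E" and f: "\<phi> f = ebas 0" using surjE[OF ebas_E[OF R4_mem(1)]] by blast
  obtain k where kE: "k \<in> E" and k: "\<phi> k = ebas 1" using surjE[OF ebas_E[OF R4_mem(2)]] by blast
  have f0: "f 0 * v0 0 + f 1 * v1 0 + f 2 * v2 0 + f 3 * v3 0 = 1" using lin[OF fE, of 0] f by (simp add: ebas_def)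
  have f2: "f 0 * v0 2 + f 1 * v1 2 + f 2 * v2 2 + f 3 * v3 2 = 0" using lin[OF fE, of 2] f by (simp add: ebas_def)
  have k1: "k 0 * v0 1 + k 1 * v1 1 + k 2 * v2 1 + k 3 * v3 1 = 1" using lin[OF kE, of 1] k by (simp add: ebas_def)
  have k3: "k 0 * v0 3 + k 1 * v1 3 + k 2 * v2 3 + k 3 * v3 3 = 0" using lin[OF kE, of 3] k by (simp add: ebas_def)
  have goal: "\<exists>g\<in>CT. v0 = Phi g (ebas 0) \<and> v1 = Phi g (ebas 1) \<and> v2 = Phi g (ebas 2) \<and> v3 = Phi g (ebas 3)"
  proof -
    from t0 show ?thesis
    proof
      assume A0: "v0 1 = 0 \<and> v0 3 = 0 \<and> v0 0 + v0 2 = 1"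
      from t1 show ?thesis
      proof
        assume "v1 1 = 0 \<and> v1 3 = 0 \<and> v1 0 + v1 2 = 1"
        then have "v2 = v0" using A0 m2 by (intro vec_eq[OF E2 E0]) (simp_all add: mult_expl)
        then show ?thesis using ne by simp
      next
        assume A1: "v1 0 = 0 \<and> v1 2 = 0 \<and> v1 1 + v1 3 = 1"
        have v2s: "v2 0 = v0 2" "v2 1 = 0" "v2 2 = v0 0" "v2 3 = 0"
          using A0 A1 m2 by (simp_all add: mult_expl)
        have v3s: "v3 0 = 0" "v3 1 = v1 3" "v3 2 = 0" "v3 3 = v1 1"
          using A0 A1 m3 by (simp_all add: mult_expl)
        have a02: "v0 2 = 1 - v0 0" and a13: "v1 3 = 1 - v1 1" using A0 A1 by auto
        have "f 0 * v0 0 + f 2 * (1 - v0 0) = 1" using f0 A1 v2s v3s a02 by simp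
        moreover have "f 0 * (1 - v0 0) + f 2 * v0 0 = 0" using f2 A1 v2s v3s a02 by simp
        ultimately have tt: "v0 0 = 0 \<or> v0 0 = 1" by (rule par01)
        have "k 1 * v1 1 + k 3 * (1 - v1 1) = 1" using k1 A0 v2s v3s a13 by simp
        moreover have "k 1 * (1 - v1 1) + k 3 * v1 1 = 0" using k3 A0 v2s v3s a13 by simp
        ultimately have ss: "v1 1 = 0 \<or> v1 1 = 1" by (rule par01)
        show ?thesis
        proof (rule caseA_fin[OF _ _ _ _ tt ss])
          show "v0 = vec (v0 0) 0 (1 - v0 0) 0" using A0 a02 by (intro vec_rep[OF E0]) auto
          show "v1 = vec 0 (v1 1) 0 (1 - v1 1)" using A1 a13 by (intro vec_rep[OF E1]) auto
          show "v2 = vec (1 - v0 0) 0 (v0 0) 0" using v2s a02 by (intro vec_rep[OF E2]) auto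
          show "v3 = vec 0 (1 - v1 1) 0 (v1 1)" using v3s a13 by (intro vec_rep[OF E3]) auto
        qed
      qed
    next
      assume B0: "v0 0 = 0 \<and> v0 2 = 0 \<and> v0 1 + v0 3 = 1"
      from t1 show ?thesis
      proof
        assume B1: "v1 1 = 0 \<and> v1 3 = 0 \<and> v1 0 + v1 2 = 1"
        have v2s: "v2 0 = 0" "v2 1 = v0 3" "v2 2 = 0" "v2 3 = v0 1"
          using B0 B1 m2 by (simp_all add: mult_expl)
        have v3s: "v3 0 = v1 2" "v3 1 = 0" "v3 2 = v1 0" "v3 3 = 0"
          using B0 B1 m3 by (simp_all add: mult_expl)
        have a13: "v0 3 = 1 - v0 1" and a02: "v1 2 = 1 - v1 0" using B0 B1 by auto
        have "k 0 * v0 1 + k 2 * (1 - v0 1) = 1" using k1 B1 v2s v3s a13 by simp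
        moreover have "k 0 * (1 - v0 1) + k 2 * v0 1 = 0" using k3 B1 v2s v3s a13 by simp
        ultimately have tt: "v0 1 = 0 \<or> v0 1 = 1" by (rule par01)
        have "f 1 * v1 0 + f 3 * (1 - v1 0) = 1" using f0 B0 v2s v3s a02 by simp
        moreover have "f 1 * (1 - v1 0) + f 3 * v1 0 = 0" using f2 B0 v2s v3s a02 by simp
        ultimately have ss: "v1 0 = 0 \<or> v1 0 = 1" by (rule par01)
        show ?thesis
        proof (rule caseB_fin[OF _ _ _ _ tt ss])
          show "v0 = vec 0 (v0 1) 0 (1 - v0 1)" using B0 a13 by (intro vec_rep[OF E0]) auto
          show "v1 = vec (v1 0) 0 (1 - v1 0) 0" using B1 a02 by (intro vec_rep[OF E1]) auto
          show "v2 = vec 0 (1 - v0 1) 0 (v0 1)" using v2s a13 by (intro vec_rep[OF E2]) auto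
          show "v3 = vec (1 - v1 0) 0 (v1 0) 0" using v3s a02 by (intro vec_rep[OF E3]) auto
        qed
      next
        assume "v1 0 = 0 \<and> v1 2 = 0 \<and> v1 1 + v1 3 = 1"
        then have "v2 = v0" using B0 m2 by (intro vec_eq[OF E2 E0]) (simp_all add: mult_expl)
        then show ?thesis using ne by simp
      qed
    qed
  qed
  then obtain g where g: "g \<in> CT" and gv: "v0 = Phi g (ebas 0)" "v1 = Phi g (ebas 1)"
    "v2 = Phi g (ebas 2)" "v3 = Phi g (ebas 3)" by blast
  have "\<phi> = Phi g"
  proof (rule aut_eq[OF aut Phi_aut[OF g]])
    fix i assume "i \<in> R4"
    then show "\<phi> (ebas i) = Phi g (ebas i)" using gv unfolding v0_def v1_def v2_def v3_def R4_iff by auto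
  qed
  then show ?thesis using g by blast
qed

end


lemma Phi_bij: "bij_betw Phi CT (qring_auts R4 R4_op)"
proof -
  have "Phi ` CT = qring_auts R4 R4_op"
  proof
    show "Phi ` CT \<subseteq> qring_auts R4 R4_op" using Phi_aut by blast
    show "qring_auts R4 R4_op \<subseteq> Phi ` CT"
    proof
      fix \<phi> assume "\<phi> \<in> qring_auts R4 R4_op"
      then obtain g where "g \<in> CT" "\<phi> = Phi g" using autR4.classify[OF autR4.intro] by blast
      then show "\<phi> \<in> Phi ` CT" by blast
    qed
  qed
  then show ?thesis using Phi_inj by (simp add: bij_betw_def)
qed

theorem theorem6p4:
  shows "qring_Aut R4 R4_op \<cong> Z2xZ2_rtimes_Z2"
proof -
  define \<psi> where "\<psi> = inv_into CT Phi"
  have bij: "bij_betw \<psi> (qring_auts R4 R4_op) CT"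
    unfolding \<psi>_def by (rule bij_betw_inv_into[OF Phi_bij])
  have psiPhi: "\<psi> (Phi g) = g" if "g \<in> CT" for g
    unfolding \<psi>_def using Phi_inj that by (rule inv_into_f_f)
  have Phipsi: "Phi (\<psi> \<phi>) = \<phi>" if "\<phi> \<in> qring_auts R4 R4_op" for \<phi>
    unfolding \<psi>_def using Phi_bij that by (simp add: bij_betw_inv_into_right)
  have psiCT: "\<psi> \<phi> \<in> CT" if "\<phi> \<in> qring_auts R4 R4_op" for \<phi>
    by (rule bij_betw_apply[OF bij that])
  have hom: "\<psi> \<in> hom (qring_Aut R4 R4_op) Z2xZ2_rtimes_Z2"
  proof (rule homI)
    fix \<phi> assume "\<phi> \<in> carrier (qring_Aut R4 R4_op)"
    then show "\<psi> \<phi> \<in> CT" using psiCT by (simp add: qring_Aut_def)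
  next
    fix \<phi>1 \<phi>2 assume a: "\<phi>1 \<in> carrier (qring_Aut R4 R4_op)" "\<phi>2 \<in> carrier (qring_Aut R4 R4_op)"
    then have a1: "\<phi>1 \<in> qring_auts R4 R4_op" and a2: "\<phi>2 \<in> qring_auts R4 R4_op"
      by (simp_all add: qring_Aut_def)
    have "\<phi>1 \<otimes>\<^bsub>qring_Aut R4 R4_op\<^esub> \<phi>2 = compose E (Phi (\<psi> \<phi>1)) (Phi (\<psi> \<phi>2))"
      using Phipsi[OF a1] Phipsi[OF a2] by (simp add: qring_Aut_def)
    also have "\<dots> = Phi (\<psi> \<phi>1 \<otimes>\<^bsub>Z2xZ2_rtimes_Z2\<^esub> \<psi> \<phi>2)"
      by (rule Phi_hom[OF psiCT[OF a1] psiCT[OF a2], symmetric])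
    finally have "\<psi> (\<phi>1 \<otimes>\<^bsub>qring_Aut R4 R4_op\<^esub> \<phi>2) = \<psi> (Phi (\<psi> \<phi>1 \<otimes>\<^bsub>Z2xZ2_rtimes_Z2\<^esub> \<psi> \<phi>2))"
      by simp
    also have "\<dots> = \<psi> \<phi>1 \<otimes>\<^bsub>Z2xZ2_rtimes_Z2\<^esub> \<psi> \<phi>2"
      by (rule psiPhi[OF multT_closed[OF psiCT[OF a1] psiCT[OF a2]]])
    finally show "\<psi> (\<phi>1 \<otimes>\<^bsub>qring_Aut R4 R4_op\<^esub> \<phi>2) = \<psi> \<phi>1 \<otimes>\<^bsub>Z2xZ2_rtimes_Z2\<^esub> \<psi> \<phi>2" .
  qed
  have "\<psi> \<in> iso (qring_Aut R4 R4_op) Z2xZ2_rtimes_Z2"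
    using hom bij by (intro isoI) (simp_all add: qring_Aut_def)
  then show ?thesis by (rule is_isoI)
qed

end
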